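(* Let $G$ be a reduced torsion-free abelian group. Then the following are equivalent: (i) $G$ is semi-generalized Bassian; (ii) $G$ is Bassian; (iii) $G$ has finite rank.
   Context: All groups are additively written abelian groups. A subgroup $H$ of a group $A$ is essential in $A$ if $H \cap S \neq \{0\}$ for every non-zero subgroup $S$ of $A$. A group $G$ is Bassian if the existence of an injective homomorphism $G\to G/N$ for a subgroup $N\le G$ forces $N=\{0\}$. $G$ is semi-generalized Bassian if, for every subgroup $H \le G$, the existence of an injective homomorphism $G \to G/H$ implies that $H$ is an essential subgroup of some direct summand of $G$. *)

theory Defs
  imports Main
begin

text \<open>Abelian groups are modelled as types of class ab_group_add; the group G is the
whole type. Subgroups are subsets, the quotient G/N is the set of cosets of N.\<close>

definition zmul :: "int \<Rightarrow> 'a::ab_group_add \<Rightarrow> 'a" where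
  "zmul k x = (if k \<ge> 0 then ((\<lambda>y. x + y) ^^ nat k) 0 else - (((\<lambda>y. x + y) ^^ nat (- k)) 0))"

definition subgrp :: "'a::ab_group_add set \<Rightarrow> bool" where
  "subgrp H \<longleftrightarrow> 0 \<in> H \<and> (\<forall>x\<in>H. \<forall>y\<in>H. x + y \<in> H) \<and> (\<forall>x\<in>H. - x \<in> H)"

definition cosets :: "'a::ab_group_add set \<Rightarrow> 'a set set" where
  "cosets N = {(\<lambda>n. x + n) ` N | x. True}"

definition coset_add :: "'a::ab_group_add set \<Rightarrow> 'a set \<Rightarrow> 'a set" where
  "coset_add A B = {a + b | a b. a \<in> A \<and> b \<in> B}"

definition inj_hom_to_quot :: "('a::ab_group_add \<Rightarrow> 'a set) \<Rightarrow> 'a set \<Rightarrow> bool" where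
  "inj_hom_to_quot f N \<longleftrightarrow> (\<forall>x. f x \<in> cosets N) \<and>
      (\<forall>x y. f (x + y) = coset_add (f x) (f y)) \<and> inj f"

definition essential_in :: "'a::ab_group_add set \<Rightarrow> 'a set \<Rightarrow> bool" where
  "essential_in H A \<longleftrightarrow> subgrp H \<and> H \<subseteq> A \<and>
      (\<forall>S. subgrp S \<and> S \<subseteq> A \<and> S \<noteq> {0} \<longrightarrow> H \<inter> S \<noteq> {0})"

definition direct_summand :: "'a::ab_group_add set \<Rightarrow> bool" where
  "direct_summand S \<longleftrightarrow> subgrp S \<and> (\<exists>T. subgrp T \<and> S \<inter> T = {0} \<and>
      (\<forall>g. \<exists>s\<in>S. \<exists>t\<in>T. g = s + t))"

definition bassian :: "'a::ab_group_add itself \<Rightarrow> bool" where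
  "bassian _ \<longleftrightarrow> (\<forall>N::'a set. subgrp N \<and> (\<exists>f. inj_hom_to_quot f N) \<longrightarrow> N = {0})"

definition semi_gen_bassian :: "'a::ab_group_add itself \<Rightarrow> bool" where
  "semi_gen_bassian _ \<longleftrightarrow> (\<forall>H::'a set. subgrp H \<and> (\<exists>f. inj_hom_to_quot f H) \<longrightarrow>
      (\<exists>S. direct_summand S \<and> essential_in H S))"

definition torsion_free :: "'a::ab_group_add itself \<Rightarrow> bool" where
  "torsion_free _ \<longleftrightarrow> (\<forall>(x::'a) (n::nat). x \<noteq> 0 \<and> n > 0 \<longrightarrow> zmul (int n) x \<noteq> 0)"

definition divisible_subgrp :: "'a::ab_group_add set \<Rightarrow> bool" where
  "divisible_subgrp D \<longleftrightarrow> subgrp D \<and> (\<forall>x\<in>D. \<forall>n::nat. n > 0 \<longrightarrow> (\<exists>y\<in>D. zmul (int n) y = x))"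

definition reduced :: "'a::ab_group_add itself \<Rightarrow> bool" where
  "reduced _ \<longleftrightarrow> (\<forall>D::'a set. divisible_subgrp D \<longrightarrow> D = {0})"

definition z_independent :: "'a::ab_group_add set \<Rightarrow> bool" where
  "z_independent S \<longleftrightarrow> (\<forall>F c. finite F \<and> F \<subseteq> S \<and> (\<Sum>x\<in>F. zmul (c x) x) = 0 \<longrightarrow>
      (\<forall>x\<in>F. c x = 0))"

definition finite_rank :: "'a::ab_group_add itself \<Rightarrow> bool" where
  "finite_rank _ \<longleftrightarrow> (\<exists>S::'a set. finite S \<and> z_independent S \<and>
      (\<forall>T. S \<subseteq> T \<and> z_independent T \<longrightarrow> T = S))"

end

theory Submission
  imports Defs Complex_Main
begin


definition natmul :: "nat \<Rightarrow> 'a::ab_group_add \<Rightarrow> 'a" where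
  "natmul n x = ((\<lambda>y. x + y) ^^ n) 0"

lemma natmul_0[simp]: "natmul 0 x = 0" by (simp add: natmul_def)
lemma natmul_Suc[simp]: "natmul (Suc n) x = x + natmul n x" by (simp add: natmul_def)
lemma natmul_add: "natmul (m + n) x = natmul m x + natmul n x"
  by (induction m) (auto simp: add.assoc)
lemma natmul_add_right: "natmul n (x + y) = natmul n x + natmul n y"
  by (induction n) (auto simp: algebra_simps)
lemma natmul_zero[simp]: "natmul n (0::'a::ab_group_add) = 0"
  by (induction n) auto

lemma zmul_nat: "zmul (int n) x = natmul n x" by (simp add: zmul_def natmul_def)
lemma zmul_negnat: "zmul (- int n) x = - natmul n x"
proof (cases "n = 0")
  case False
  then have "\<not> (- int n \<ge> 0)" "nat (- (- int n)) = n" by auto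
  then show ?thesis unfolding zmul_def natmul_def by presburger
qed (simp add: zmul_def natmul_def)

lemma zmul_cases:
  obtains n where "k = int n" "zmul k x = natmul n x" | n where "k = - int n" "zmul k x = - natmul n x"
  by (metis zmul_nat zmul_negnat int_cases2)

lemma zmul_0[simp]: "zmul 0 x = 0" by (simp add: zmul_def)
lemma zmul_1[simp]: "zmul 1 x = x" by (simp add: zmul_def)
lemma zmul_zero[simp]: "zmul k 0 = 0" by (cases k rule: int_cases2) (auto simp: zmul_nat zmul_negnat)

lemma zmul_succ: "zmul (k + 1) x = zmul k x + x"
proof (cases k rule: int_cases2)
  case (nonneg n)
  then show ?thesis using zmul_nat[of "Suc n" x] zmul_nat[of n x] by (simp add: add.commute)
next
  case (nonpos n)
  show ?thesis
  proof (cases n)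
    case 0 then show ?thesis using nonpos by simp
  next
    case (Suc m)
    have "k + 1 = - int m" using nonpos Suc by simp
    then have a: "zmul (k+1) x = - natmul m x" using zmul_negnat by metis
    have b: "zmul k x = - natmul (Suc m) x" using nonpos Suc zmul_negnat by metis
    show ?thesis unfolding a b by simp
  qed
qed

lemma zmul_add_left: "zmul (k + l) x = zmul k x + zmul l x"
proof (induction l rule: int_induct[where k=0])
  case base then show ?case by simp
next
  case (step1 i)
  then show ?case using zmul_succ[of "k+i" x] zmul_succ[of i x] by (simp add: algebra_simps)
next
  case (step2 i)
  then show ?case using zmul_succ[of "k+i-1" x] zmul_succ[of "i-1" x] by (simp add: algebra_simps)
qed

lemma zmul_uminus_left: "zmul (- k) x = - zmul k x"
  using zmul_add_left[of k "-k" x] by (simp add: eq_neg_iff_add_eq_0 add.commute)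

lemma zmul_diff_left: "zmul (k - l) x = zmul k x - zmul l x"
  using zmul_add_left[of k "-l" x] zmul_uminus_left[of l x] by simp

lemma zmul_add_right: "zmul k (x + y) = zmul k x + zmul k y"
  by (cases k rule: int_cases2) (auto simp: zmul_nat zmul_negnat natmul_add_right)

lemma zmul_uminus_right: "zmul k (- x) = - zmul k x"
  using zmul_add_right[of k x "-x"] by (simp add: minus_unique)

lemma zmul_diff_right: "zmul k (x - y) = zmul k x - zmul k y"
  using zmul_add_right[of k x "-y"] zmul_uminus_right[of k y] by simp

lemma zmul_mult: "zmul (k * l) x = zmul k (zmul l x)"
proof (induction k rule: int_induct[where k=0])
  case base then show ?case by simp
next
  case (step1 i)
  then show ?case by (simp add: distrib_right zmul_add_left)
next
  case (step2 i)
  then show ?case by (simp add: left_diff_distrib zmul_diff_left)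
qed

lemma zmul_sum_right: "zmul k (sum f A) = (\<Sum>a\<in>A. zmul k (f a))"
  by (induction A rule: infinite_finite_induct) (auto simp: zmul_add_right)

lemma zmul_sum_left: "zmul (sum f A) x = (\<Sum>a\<in>A. zmul (f a) x)"
  by (induction A rule: infinite_finite_induct) (auto simp: zmul_add_left)

lemma hom_zmul:
  fixes h :: "'a::ab_group_add \<Rightarrow> 'b::ab_group_add"
  assumes "\<And>x y. h (x + y) = h x + h y"
  shows "h (zmul k x) = zmul k (h x)"
proof -
  have h0: "h 0 = 0" using assms[of 0 0] by simp
  show ?thesis
  proof (induction k rule: int_induct[where k=0])
    case base then show ?case by (simp add: h0)
  next
    case (step1 i) then show ?case by (simp add: zmul_succ assms)
  next
    case (step2 i)
    have "h (zmul (i - 1) x) + h x = h (zmul i x)" using zmul_succ[of "i-1" x] assms by (metis diff_add_cancel)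
    moreover have "zmul (i - 1) (h x) + h x = zmul i (h x)" using zmul_succ[of "i-1" "h x"] by simp
    ultimately show ?case using step2 by (metis add_right_cancel)
  qed
qed

definition supp :: "('a \<Rightarrow> 'b::zero) \<Rightarrow> 'a set" where "supp c = {x. c x \<noteq> 0}"

definition lin :: "('a::ab_group_add \<Rightarrow> int) \<Rightarrow> 'a" where
  "lin c = (\<Sum>x\<in>supp c. zmul (c x) x)"

lemma lin_eq: assumes "finite F" "supp c \<subseteq> F" shows "lin c = (\<Sum>x\<in>F. zmul (c x) x)"
  unfolding lin_def by (rule sum.mono_neutral_left) (use assms in \<open>auto simp: supp_def\<close>)

lemma lin_zero[simp]: "lin (\<lambda>x. 0) = 0" by (simp add: lin_def supp_def)

lemma supp_add: "supp (\<lambda>x. c x + d x) \<subseteq> supp c \<union> supp (d::'a \<Rightarrow> 'b::comm_monoid_add)" by (auto simp: supp_def)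
lemma supp_mult: "supp (\<lambda>x. k * c x) \<subseteq> supp (c::'a \<Rightarrow> 'b::mult_zero)" by (auto simp: supp_def)
lemma supp_uminus[simp]: "supp (\<lambda>x. - c x) = supp (c::'a \<Rightarrow> 'b::group_add)" by (auto simp: supp_def)

lemma lin_add: assumes "finite (supp c)" "finite (supp d)"
  shows "lin (\<lambda>x. c x + d x) = lin c + lin d"
proof -
  let ?F = "supp c \<union> supp d"
  have "lin (\<lambda>x. c x + d x) = (\<Sum>x\<in>?F. zmul (c x + d x) x)"
    using assms supp_add[of c d] by (intro lin_eq) auto
  also have "\<dots> = (\<Sum>x\<in>?F. zmul (c x) x) + (\<Sum>x\<in>?F. zmul (d x) x)"
    by (simp add: zmul_add_left sum.distrib)
  also have "\<dots> = lin c + lin d" using assms lin_eq[of ?F c] lin_eq[of ?F d] by auto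
  finally show ?thesis .
qed

lemma lin_mult: assumes "finite (supp c)" shows "lin (\<lambda>x. k * c x) = zmul k (lin c)"
proof -
  have "lin (\<lambda>x. k * c x) = (\<Sum>x\<in>supp c. zmul (k * c x) x)"
    using assms supp_mult[of k c] by (intro lin_eq) auto
  also have "\<dots> = zmul k (lin c)" by (simp add: lin_def zmul_mult zmul_sum_right)
  finally show ?thesis .
qed

lemma lin_uminus: assumes "finite (supp c)" shows "lin (\<lambda>x. - c x) = - lin c"
  using lin_mult[OF assms, of "-1"] by (simp add: zmul_uminus_left)

lemma lin_diff: assumes "finite (supp c)" "finite (supp d)"
  shows "lin (\<lambda>x. c x - d x) = lin c - lin d"
  using lin_add[of c "\<lambda>x. - d x"] lin_uminus[of d] assms by simp

lemma indep_sub: "z_independent X \<Longrightarrow> Y \<subseteq> X \<Longrightarrow> z_independent Y"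
  unfolding z_independent_def by blast

lemma indepD: assumes "z_independent S" "finite F" "F \<subseteq> S" "(\<Sum>x\<in>F. zmul (c x) x) = 0" "x \<in> F"
  shows "c x = 0"
  using assms unfolding z_independent_def by (drule_tac spec[of _ F], drule_tac spec[of _ c]) auto

lemma indep_lin: assumes "z_independent X" "finite (supp c)" "supp c \<subseteq> X" "lin c = 0"
  shows "c x = 0"
proof (rule ccontr)
  assume "c x \<noteq> 0"
  then have "x \<in> supp c" by (simp add: supp_def)
  then show False using assms \<open>c x \<noteq> 0\<close> unfolding z_independent_def lin_def by blast
qed

lemma indep_lin_inj: assumes "z_independent X" "finite (supp c)" "supp c \<subseteq> X"
    "finite (supp d)" "supp d \<subseteq> X" "lin c = lin d"
  shows "c = d"
proof
  fix x
  have "lin (\<lambda>x. c x - d x) = 0" using assms by (simp add: lin_diff)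
  moreover have "supp (\<lambda>x. c x - d x) \<subseteq> supp c \<union> supp d" by (auto simp: supp_def)
  ultimately have "c x - d x = 0" using assms
    by (intro indep_lin[of X "\<lambda>x. c x - d x"]) (auto intro: finite_subset)
  then show "c x = d x" by simp
qed

lemma torsion_free_zmul: assumes "torsion_free TYPE('a::ab_group_add)" "k \<noteq> 0" "zmul k (x::'a) = 0"
  shows "x = 0"
proof -
  obtain n where n: "n > 0" "k = int n \<or> k = - int n" using assms(2)
    by (metis int_cases2 neq0_conv of_nat_0 minus_zero)
  then have "zmul (int n) x = 0" using assms(3) by (auto simp: zmul_uminus_left)
  then show ?thesis using assms(1) n(1) unfolding torsion_free_def by blast
qed

lemma indep_zero: assumes "z_independent X" shows "0 \<notin> X"
proof
  assume "0 \<in> X"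
  moreover have "finite {0::'a}" "(\<Sum>x\<in>{0::'a}. zmul ((\<lambda>_. 1::int) x) x) = 0" by simp_all
  ultimately have "\<forall>x\<in>{0::'a}. (\<lambda>_. 1::int) x = 0"
    using assms[unfolded z_independent_def, rule_format, of "{0}" "\<lambda>_. 1"] \<open>0 \<in> X\<close> by simp
  then show False by simp
qed

lemma maxrep:
  assumes ind: "z_independent X" and mx: "\<forall>T. X \<subseteq> T \<and> z_independent T \<longrightarrow> T = X"
  shows "\<exists>m c. m \<noteq> 0 \<and> finite (supp c) \<and> supp c \<subseteq> X \<and> zmul m g = lin c"
proof (cases "g \<in> X")
  case True
  let ?c = "\<lambda>x. if x = g then 1 else 0::int"
  have s: "supp ?c = {g}" by (auto simp: supp_def)
  have "lin ?c = g" unfolding lin_def s by simp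
  then show ?thesis using True s by (intro exI[of _ 1] exI[of _ ?c]) auto
next
  case False
  then have "insert g X \<noteq> X" by auto
  then have "\<not> z_independent (insert g X)" using mx by auto
  then obtain F c where F: "finite F" "F \<subseteq> insert g X" "(\<Sum>x\<in>F. zmul (c x) x) = 0"
    and nz: "\<exists>x\<in>F. c x \<noteq> 0" unfolding z_independent_def by blast
  let ?F = "F - {g}"
  have split: "(\<Sum>x\<in>F. zmul (c x) x) = (if g \<in> F then zmul (c g) g else 0) + (\<Sum>x\<in>?F. zmul (c x) x)"
    using F(1) by (cases "g \<in> F") (auto simp: sum.remove)
  have gF: "g \<in> F \<and> c g \<noteq> 0"
  proof (rule ccontr)
    assume a: "\<not> (g \<in> F \<and> c g \<noteq> 0)"
    then have "(\<Sum>x\<in>?F. zmul (c x) x) = 0" using split F(3) by (cases "g \<in> F") auto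
    moreover have "?F \<subseteq> X" "finite ?F" using F by auto
    ultimately have "\<forall>x\<in>?F. c x = 0" using ind unfolding z_independent_def by blast
    then show False using nz a by auto
  qed
  let ?d = "\<lambda>x. if x \<in> ?F then - c x else 0"
  have sd: "supp ?d \<subseteq> ?F" by (auto simp: supp_def)
  have "lin ?d = (\<Sum>x\<in>?F. zmul (?d x) x)" using sd F(1) by (intro lin_eq) auto
  also have "\<dots> = - (\<Sum>x\<in>?F. zmul (c x) x)"
    by (simp add: zmul_uminus_left sum_negf)
  also have "\<dots> = zmul (c g) g"
  proof -
    have "zmul (c g) g + (\<Sum>x\<in>?F. zmul (c x) x) = 0" using split F(3) gF by simp
    then show ?thesis by (simp add: neg_eq_iff_add_eq_0 add.commute)
  qed
  finally show ?thesis using gF sd F by (intro exI[of _ "c g"] exI[of _ ?d]) (auto intro: finite_subset)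
qed




lemma int_dep:
  fixes v :: "'b \<Rightarrow> 'c \<Rightarrow> int"
  assumes "finite S" "finite T" "card S < card T"
  shows "\<exists>d. (\<exists>t\<in>T. d t \<noteq> 0) \<and> (\<forall>s\<in>S. (\<Sum>t\<in>T. d t * v t s) = 0)"
  using assms
proof (induction S arbitrary: T v rule: finite_induct)
  case empty
  then have "T \<noteq> {}" by auto
  then show ?case by (intro exI[of _ "\<lambda>_. 1"]) auto
next
  case (insert s S)
  show ?case
  proof (cases "\<forall>t\<in>T. v t s = 0")
    case True
    have "card S < card T" using insert by simp
    then obtain d where d: "\<exists>t\<in>T. d t \<noteq> 0" "\<forall>s\<in>S. (\<Sum>t\<in>T. d t * v t s) = 0"
      using insert.IH[of T v] insert.prems by blast
    then show ?thesis using True by (intro exI[of _ d]) auto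
  next
    case False
    then obtain t0 where t0: "t0 \<in> T" "v t0 s \<noteq> 0" by auto
    define a where "a = v t0 s"
    define T' where "T' = T - {t0}"
    define w where "w = (\<lambda>t s'. a * v t s' - v t s * v t0 s')"
    have cT: "card S < card T'" using insert t0 by (simp add: T'_def)
    obtain d' where d': "\<exists>t\<in>T'. d' t \<noteq> 0" "\<forall>s'\<in>S. (\<Sum>t\<in>T'. d' t * w t s') = 0"
      using insert.IH[of T' w] cT insert.prems by (auto simp: T'_def)
    define d where "d = (\<lambda>t. if t = t0 then - (\<Sum>t\<in>T'. d' t * v t s) else a * d' t)"
    have key: "(\<Sum>t\<in>T. d t * v t s') = (\<Sum>t\<in>T'. d' t * w t s')" for s'
    proof -
      have "(\<Sum>t\<in>T. d t * v t s') = d t0 * v t0 s' + (\<Sum>t\<in>T'. d t * v t s')"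
        using t0 insert.prems by (simp add: T'_def sum.remove)
      also have "(\<Sum>t\<in>T'. d t * v t s') = (\<Sum>t\<in>T'. a * d' t * v t s')"
        by (rule sum.cong) (auto simp: d_def T'_def)
      also have "d t0 * v t0 s' = - (\<Sum>t\<in>T'. d' t * v t s * v t0 s')"
        by (simp add: d_def sum_distrib_right)
      finally show ?thesis
        by (simp add: w_def algebra_simps sum_subtractf sum_distrib_left)
    qed
    show ?thesis
    proof (intro exI[of _ d] conjI)
      from d' obtain t where "t \<in> T'" "d' t \<noteq> 0" by auto
      then show "\<exists>t\<in>T. d t \<noteq> 0" using t0 by (intro bexI[of _ t]) (auto simp: d_def T'_def a_def)
      show "\<forall>s'\<in>insert s S. (\<Sum>t\<in>T. d t * v t s') = 0"
      proof
        fix s' assume "s' \<in> insert s S"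
        then show "(\<Sum>t\<in>T. d t * v t s') = 0"
        proof
          assume "s' = s"
          then show ?thesis unfolding key by (simp add: w_def a_def)
        next
          assume "s' \<in> S" then show ?thesis unfolding key using d' by auto
        qed
      qed
    qed
  qed
qed




lemma subgrp_0: "subgrp N \<Longrightarrow> 0 \<in> N" by (simp add: subgrp_def)
lemma subgrp_add: "subgrp N \<Longrightarrow> x \<in> N \<Longrightarrow> y \<in> N \<Longrightarrow> x + y \<in> N" by (simp add: subgrp_def)
lemma subgrp_neg: "subgrp N \<Longrightarrow> x \<in> N \<Longrightarrow> - x \<in> N" by (simp add: subgrp_def)
lemma subgrp_neg_iff: "subgrp N \<Longrightarrow> - x \<in> N \<longleftrightarrow> x \<in> N" using subgrp_neg by fastforce
lemma subgrp_diff: "subgrp N \<Longrightarrow> x \<in> N \<Longrightarrow> y \<in> N \<Longrightarrow> x - y \<in> N"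
  using subgrp_add[of N x "-y"] subgrp_neg by fastforce
lemma subgrp_zmul: assumes "subgrp N" "x \<in> N" shows "zmul k x \<in> N"
proof (induction k rule: int_induct[where k=0])
  case base then show ?case using assms by (simp add: subgrp_0)
next
  case (step1 i) then show ?case using assms by (simp add: zmul_succ subgrp_add)
next
  case (step2 i)
  have "zmul (i - 1) x = zmul i x - x" using zmul_succ[of "i-1" x] by (simp add: algebra_simps)
  then show ?case using step2 assms by (simp add: subgrp_diff)
qed
lemma subgrp_sum: "subgrp N \<Longrightarrow> (\<And>a. a \<in> A \<Longrightarrow> g a \<in> N) \<Longrightarrow> sum g A \<in> N"
  by (induction A rule: infinite_finite_induct) (auto simp: subgrp_0 subgrp_add)

lemma coset_eq: assumes "subgrp N" shows "((+) a ` N = (+) b ` N) \<longleftrightarrow> a - b \<in> N"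
proof
  assume "(+) a ` N = (+) b ` N"
  then have "a + 0 \<in> (+) b ` N" using subgrp_0[OF assms] by blast
  then obtain n where "n \<in> N" "a = b + n" by auto
  then show "a - b \<in> N" by simp
next
  assume ab: "a - b \<in> N"
  show "(+) a ` N = (+) b ` N"
  proof safe
    fix n assume "n \<in> N"
    then have "(a - b) + n \<in> N" using ab assms subgrp_add by blast
    then show "a + n \<in> (+) b ` N" by (intro image_eqI[of _ _ "(a - b) + n"]) auto
  next
    fix n assume "n \<in> N"
    then have "n - (a - b) \<in> N" using ab assms subgrp_diff by blast
    then show "b + n \<in> (+) a ` N" by (intro image_eqI[of _ _ "n - (a - b)"]) auto
  qed
qed

lemma coset_0: "subgrp N \<Longrightarrow> (+) 0 ` N = N" by simp

lemma coset_is_N: "subgrp N \<Longrightarrow> ((+) a ` N = N) \<longleftrightarrow> a \<in> N"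
  using coset_eq[of N a 0] by simp

lemma coset_add_eq: assumes "subgrp N"
  shows "coset_add ((+) a ` N) ((+) b ` N) = (+) (a + b) ` N"
proof safe
  fix x assume "x \<in> coset_add ((+) a ` N) ((+) b ` N)"
  then obtain n m where "n \<in> N" "m \<in> N" "x = (a + n) + (b + m)" unfolding coset_add_def by auto
  then show "x \<in> (+) (a + b) ` N" using subgrp_add[OF assms, of n m]
    by (intro image_eqI[of _ _ "n + m"]) (auto simp: algebra_simps)
next
  fix n assume "n \<in> N"
  then show "a + b + n \<in> coset_add ((+) a ` N) ((+) b ` N)" unfolding coset_add_def
    using subgrp_0[OF assms]
    by (intro CollectI exI[of _ "a + n"] exI[of _ "b + 0"]) (auto simp: algebra_simps)
qed

lemma supp_sum: "supp (\<lambda>x. \<Sum>t\<in>T. f t x) \<subseteq> (\<Union>t\<in>T. supp (f t :: 'a \<Rightarrow> 'b::comm_monoid_add))"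
proof
  fix x assume "x \<in> supp (\<lambda>x. \<Sum>t\<in>T. f t x)"
  then have "(\<Sum>t\<in>T. f t x) \<noteq> 0" by (simp add: supp_def)
  have "\<exists>t\<in>T. f t x \<noteq> 0"
  proof (rule ccontr)
    assume "\<not> (\<exists>t\<in>T. f t x \<noteq> 0)"
    then have "(\<Sum>t\<in>T. f t x) = 0" by simp
    then show False using \<open>(\<Sum>t\<in>T. f t x) \<noteq> 0\<close> by simp
  qed
  then obtain t where "t \<in> T" "f t x \<noteq> 0" by blast
  then show "x \<in> (\<Union>t\<in>T. supp (f t))" by (auto simp: supp_def)
qed

lemma lin_sum: assumes "finite T" "\<And>t. t \<in> T \<Longrightarrow> finite (supp (f t))"
  shows "lin (\<lambda>x. \<Sum>t\<in>T. f t x) = (\<Sum>t\<in>T. lin (f t))"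
  using assms
proof (induction T rule: finite_induct)
  case empty then show ?case by simp
next
  case (insert t T)
  have fs: "finite (supp (\<lambda>x. \<Sum>t\<in>T. f t x))"
    using supp_sum[of f T] insert by (blast intro: finite_subset)
  have "lin (\<lambda>x. \<Sum>t\<in>insert t T. f t x) = lin (\<lambda>x. f t x + (\<Sum>t\<in>T. f t x))"
    using insert by simp
  also have "\<dots> = lin (f t) + lin (\<lambda>x. \<Sum>t\<in>T. f t x)"
    using lin_add[of "f t" "\<lambda>x. \<Sum>t\<in>T. f t x"] fs insert by auto
  finally show ?case using insert by simp
qed

lemma indep_card_le:
  fixes S T :: "'a::ab_group_add set"
  assumes indS: "z_independent S" and mx: "\<forall>T. S \<subseteq> T \<and> z_independent T \<longrightarrow> T = S"
    and fS: "finite S" and indT: "z_independent T" and fT: "finite T"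
  shows "card T \<le> card S"
proof (rule ccontr)
  assume "\<not> card T \<le> card S"
  then have lt: "card S < card T" by simp
  have "\<forall>t. \<exists>m c. m \<noteq> 0 \<and> finite (supp c) \<and> supp c \<subseteq> S \<and> zmul m t = lin c"
    using maxrep[OF indS mx] by blast
  then obtain m c where mc: "\<And>t. m t \<noteq> 0" "\<And>t. finite (supp (c t))" "\<And>t. supp (c t) \<subseteq> S"
    "\<And>t. zmul (m t) t = lin (c t)" by metis
  obtain d where d: "\<exists>t\<in>T. d t \<noteq> 0" "\<forall>s\<in>S. (\<Sum>t\<in>T. d t * c t s) = 0"
    using int_dep[OF fS fT lt, of c] by blast
  have z: "(\<lambda>x. \<Sum>t\<in>T. d t * c t x) = (\<lambda>x. 0)"
  proof
    fix x show "(\<Sum>t\<in>T. d t * c t x) = 0"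
    proof (cases "x \<in> S")
      case True then show ?thesis using d by auto
    next
      case False
      then have "\<forall>t. c t x = 0" using mc(3) by (auto simp: supp_def)
      then show ?thesis by simp
    qed
  qed
  have "(\<Sum>t\<in>T. zmul (d t * m t) t) = (\<Sum>t\<in>T. lin (\<lambda>x. d t * c t x))"
    by (rule sum.cong) (auto simp: zmul_mult mc(4) lin_mult mc(2))
  also have "\<dots> = lin (\<lambda>x. \<Sum>t\<in>T. d t * c t x)"
    by (rule lin_sum[symmetric], fact fT, rule finite_subset[OF supp_mult mc(2)])
  also have "\<dots> = 0" by (simp add: z)
  finally have "\<forall>t\<in>T. d t * m t = 0" using indepD[OF indT fT order_refl, of "\<lambda>t. d t * m t"] by blast
  then show False using d mc(1) by auto
qed




lemma modN_0: fixes r :: "'a::ab_group_add \<Rightarrow> 'b::ab_group_add" assumes "subgrp N" "\<And>x y. r (x + y) - (r x + r y) \<in> N" shows "r 0 \<in> N"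
proof -
  have "r 0 - (r 0 + r 0) \<in> N" using assms(2)[of 0 0] by simp
  moreover have "r 0 - (r 0 + r 0) = - r 0" by (simp add: algebra_simps)
  ultimately show ?thesis using subgrp_neg_iff[OF assms(1), of "r 0"] by simp
qed

lemma modN_zmul: fixes r :: "'a::ab_group_add \<Rightarrow> 'b::ab_group_add" assumes N: "subgrp N" and h: "\<And>x y. r (x + y) - (r x + r y) \<in> N"
  shows "r (zmul k x) - zmul k (r x) \<in> N"
proof (induction k rule: int_induct[where k=0])
  case base then show ?case using modN_0[OF N h] by simp
next
  case (step1 i)
  have "r (zmul (i+1) x) - zmul (i+1) (r x) = (r (zmul i x + x) - (r (zmul i x) + r x)) + (r (zmul i x) - zmul i (r x))"
    by (simp add: zmul_succ)
  then show ?case using step1 h N subgrp_add by metis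
next
  case (step2 i)
  have e: "zmul i x = zmul (i - 1) x + x" "zmul i (r x) = zmul (i - 1) (r x) + r x"
    using zmul_succ[of "i-1"] by simp_all
  have "r (zmul (i-1) x) - zmul (i-1) (r x) = (r (zmul i x) - zmul i (r x)) - (r (zmul (i-1) x + x) - (r (zmul (i-1) x) + r x))"
    by (simp add: e algebra_simps)
  then show ?case using step2 h N subgrp_diff by metis
qed

lemma modN_sum: fixes r :: "'a::ab_group_add \<Rightarrow> 'b::ab_group_add" assumes N: "subgrp N" and h: "\<And>x y. r (x + y) - (r x + r y) \<in> N"
  shows "r (\<Sum>a\<in>A. g a) - (\<Sum>a\<in>A. r (g a)) \<in> N"
proof (induction A rule: infinite_finite_induct)
  case (infinite A) then show ?case using modN_0[OF N h] by simp
next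
  case empty then show ?case using modN_0[OF N h] by simp
next
  case (insert a A)
  have "r (\<Sum>a\<in>insert a A. g a) - (\<Sum>a\<in>insert a A. r (g a)) =
      (r (g a + (\<Sum>a\<in>A. g a)) - (r (g a) + r (\<Sum>a\<in>A. g a))) + (r (\<Sum>a\<in>A. g a) - (\<Sum>a\<in>A. r (g a)))"
    using insert by simp
  then show ?case using insert h N subgrp_add by metis
qed

lemma finite_rank_bassian:
  assumes tf: "torsion_free TYPE('a::ab_group_add)" and fr: "finite_rank TYPE('a)"
  shows "bassian TYPE('a)"
  unfolding bassian_def
proof (intro allI impI)
  fix N :: "'a set" assume "subgrp N \<and> (\<exists>f. inj_hom_to_quot f N)"
  then have N: "subgrp N" and "\<exists>f. inj_hom_to_quot f N" by simp_all
  then obtain f where "inj_hom_to_quot f N" by blast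
  then have fc: "\<And>x. f x \<in> cosets N"
    and fa: "\<And>x y. f (x + y) = coset_add (f x) (f y)" and fi: "inj f"
    unfolding inj_hom_to_quot_def by simp_all
  obtain S :: "'a set" where fS: "finite S" and indS: "z_independent S"
    and mx: "\<forall>T. S \<subseteq> T \<and> z_independent T \<longrightarrow> T = S"
    using fr unfolding finite_rank_def by blast
  have "\<forall>x. \<exists>c. f x = (+) c ` N" using fc unfolding cosets_def by blast
  then obtain r where r: "\<And>x. f x = (+) (r x) ` N" by metis
  have h: "r (x + y) - (r x + r y) \<in> N" for x y
    using fa[of x y] unfolding r coset_add_eq[OF N] coset_eq[OF N] .
  have f0: "f 0 = N" using modN_0[OF N h] r coset_is_N[OF N] by simp
  have fN: "f x = N \<longleftrightarrow> x = 0" for x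
    using fi f0 by (metis injD)
  show "N = {0}"
  proof (rule ccontr)
    assume "N \<noteq> {0}"
    then obtain n0 where n0: "n0 \<in> N" "n0 \<noteq> 0" using subgrp_0[OF N] by blast
    have rinj: "inj_on r S"
    proof
      fix x y assume "r x = r y" then show "x = y" using fi r by (metis injD)
    qed
    have n0S: "n0 \<notin> r ` S"
    proof
      assume "n0 \<in> r ` S"
      then obtain s where "s \<in> S" "r s = n0" by auto
      then have "f s = N" using r n0 coset_is_N[OF N] by simp
      then have "s = 0" using fN by simp
      then show False using indep_zero[OF indS] \<open>s \<in> S\<close> by simp
    qed
    let ?T = "insert n0 (r ` S)"
    have cT: "card ?T = card S + 1" using fS n0S rinj by (simp add: card_image)
    have indT: "z_independent ?T"
      unfolding z_independent_def
    proof (intro allI impI)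
      fix F c assume a: "finite F \<and> F \<subseteq> ?T \<and> (\<Sum>x\<in>F. zmul (c x) x) = 0"
      define S' where "S' = {s\<in>S. r s \<in> F}"
      have fS': "finite S'" using fS by (simp add: S'_def)
      have rS': "r ` S' = F - {n0}" using a n0S by (auto simp: S'_def)
      have injS': "inj_on r S'" using rinj by (rule inj_on_subset) (auto simp: S'_def)
      have sumF: "(\<Sum>x\<in>F. zmul (c x) x) = (if n0 \<in> F then zmul (c n0) n0 else 0) + (\<Sum>s\<in>S'. zmul (c (r s)) (r s))"
      proof -
        have "(\<Sum>x\<in>F. zmul (c x) x) = (if n0 \<in> F then zmul (c n0) n0 else 0) + (\<Sum>x\<in>F - {n0}. zmul (c x) x)"
          using a by (cases "n0 \<in> F") (auto simp: sum.remove)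
        also have "(\<Sum>x\<in>F - {n0}. zmul (c x) x) = (\<Sum>s\<in>S'. zmul (c (r s)) (r s))"
          unfolding rS'[symmetric] by (rule sum.reindex[OF injS', unfolded comp_def])
        finally show ?thesis .
      qed
      define y where "y = (\<Sum>s\<in>S'. zmul (c (r s)) s)"
      have A1: "r y - (\<Sum>s\<in>S'. r (zmul (c (r s)) s)) \<in> N" unfolding y_def by (rule modN_sum[OF N h])
      have A2: "(\<Sum>s\<in>S'. r (zmul (c (r s)) s)) - (\<Sum>s\<in>S'. zmul (c (r s)) (r s)) \<in> N"
        unfolding sum_subtractf[symmetric] by (rule subgrp_sum[OF N]) (rule modN_zmul[OF N h])
      have A3: "(\<Sum>s\<in>S'. zmul (c (r s)) (r s)) \<in> N"
      proof -
        have "(if n0 \<in> F then zmul (c n0) n0 else 0) + (\<Sum>s\<in>S'. zmul (c (r s)) (r s)) = 0"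
          using sumF a by simp
        then have "(\<Sum>s\<in>S'. zmul (c (r s)) (r s)) = - (if n0 \<in> F then zmul (c n0) n0 else 0)"
          by (metis add.commute eq_neg_iff_add_eq_0)
        then show ?thesis using subgrp_zmul[OF N n0(1)] subgrp_neg[OF N] subgrp_0[OF N] by auto
      qed
      have "r y \<in> N" using subgrp_add[OF N A1 subgrp_add[OF N A2 A3]] by simp
      then have "f y = N" using r coset_is_N[OF N] by simp
      then have "y = 0" using fN by simp
      then have cS': "\<forall>s\<in>S'. c (r s) = 0"
        using indepD[OF indS fS', of "\<lambda>s. c (r s)"] unfolding y_def S'_def by blast
      then have "(\<Sum>s\<in>S'. zmul (c (r s)) (r s)) = 0" by simp
      then have "n0 \<in> F \<Longrightarrow> zmul (c n0) n0 = 0" using sumF a by simp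
      then have "n0 \<in> F \<Longrightarrow> c n0 = 0" using torsion_free_zmul[OF tf] n0 by blast
      moreover have "\<forall>x\<in>F - {n0}. c x = 0"
      proof
        fix x assume "x \<in> F - {n0}"
        then obtain s where "s \<in> S'" "x = r s" using rS' by blast
        then show "c x = 0" using cS' by simp
      qed
      ultimately show "\<forall>x\<in>F. c x = 0" by blast
    qed
    have "card ?T \<le> card S" using indep_card_le[OF indS mx fS indT] fS by simp
    then show False using cT by simp
  qed
qed




definition nm :: "rat \<Rightarrow> int" where "nm q = fst (quotient_of q)"
definition dn :: "rat \<Rightarrow> nat" where "dn q = nat (snd (quotient_of q))"

lemma nm_dn: "of_int (nm q) / of_nat (Suc (dn q - 1)) = q"
proof -
  obtain a b where ab: "quotient_of q = (a, b)" by (cases "quotient_of q")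
  then have "b > 0" by (rule quotient_of_denom_pos)
  then have "of_nat (Suc (dn q - 1)) = (of_int b :: rat)" using ab by (simp add: dn_def)
  then show ?thesis using quotient_of_div[OF ab] ab by (simp add: nm_def)
qed

locale bctx =
  fixes X :: "'a::ab_group_add set" and \<beta> :: "'a \<times> nat \<Rightarrow> 'a"
  assumes indX: "z_independent X" and mxX: "\<forall>T. X \<subseteq> T \<and> z_independent T \<longrightarrow> T = X"
    and tf: "torsion_free TYPE('a)"
    and binj: "inj_on \<beta> (X \<times> UNIV)" and bX: "\<beta> ` (X \<times> UNIV) \<subseteq> X"
begin

definition Lam :: "'a \<Rightarrow> ('a \<Rightarrow> int) \<Rightarrow> rat" where
  "Lam b n = (\<Sum>k\<in>{k. n (\<beta> (b, k)) \<noteq> 0}. of_int (n (\<beta> (b, k))) / of_nat (Suc k))"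

lemma binj1: "b \<in> X \<Longrightarrow> inj (\<lambda>k. \<beta> (b, k))"
  using binj by (auto simp: inj_on_def)

lemma beq: "a \<in> X \<Longrightarrow> b \<in> X \<Longrightarrow> \<beta> (a, k) = \<beta> (b, l) \<longleftrightarrow> a = b \<and> k = l"
  using binj by (auto simp: inj_on_def)

lemma Lam_fin: assumes "b \<in> X" "finite (supp n)" shows "finite {k. n (\<beta> (b, k)) \<noteq> 0}"
proof -
  have "{k. n (\<beta> (b, k)) \<noteq> 0} = (\<lambda>k. \<beta> (b, k)) -` supp n" by (auto simp: supp_def)
  then show ?thesis using finite_vimageI[OF assms(2) binj1[OF assms(1)]] by simp
qed

lemma Lam_eq: assumes "finite K" "{k. n (\<beta> (b, k)) \<noteq> 0} \<subseteq> K"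
  shows "Lam b n = (\<Sum>k\<in>K. of_int (n (\<beta> (b, k))) / of_nat (Suc k))"
  unfolding Lam_def by (rule sum.mono_neutral_left) (use assms in auto)

lemma Lam_add: assumes "b \<in> X" "finite (supp n)" "finite (supp m)"
  shows "Lam b (\<lambda>x. n x + m x) = Lam b n + Lam b m"
proof -
  let ?K = "{k. n (\<beta> (b, k)) \<noteq> 0} \<union> {k. m (\<beta> (b, k)) \<noteq> 0}"
  have fK: "finite ?K" using Lam_fin assms by auto
  have "Lam b (\<lambda>x. n x + m x) = (\<Sum>k\<in>?K. of_int (n (\<beta> (b, k)) + m (\<beta> (b, k))) / of_nat (Suc k))"
    by (rule Lam_eq[OF fK]) auto
  also have "\<dots> = (\<Sum>k\<in>?K. of_int (n (\<beta> (b, k))) / of_nat (Suc k)) + (\<Sum>k\<in>?K. of_int (m (\<beta> (b, k))) / of_nat (Suc k))"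
    by (simp add: sum.distrib add_divide_distrib)
  also have "\<dots> = Lam b n + Lam b m"
    using Lam_eq[OF fK, of n b] Lam_eq[OF fK, of m b] by auto
  finally show ?thesis .
qed

lemma Lam_mult: assumes "b \<in> X" "finite (supp n)"
  shows "Lam b (\<lambda>x. c * n x) = of_int c * Lam b n"
proof -
  let ?K = "{k. n (\<beta> (b, k)) \<noteq> 0}"
  have fK: "finite ?K" using Lam_fin assms by auto
  have "Lam b (\<lambda>x. c * n x) = (\<Sum>k\<in>?K. of_int (c * n (\<beta> (b, k))) / of_nat (Suc k))"
    by (rule Lam_eq[OF fK]) auto
  also have "\<dots> = of_int c * Lam b n" unfolding Lam_def by (simp add: sum_distrib_left)
  finally show ?thesis .
qed

lemma Lam_diff: assumes "b \<in> X" "finite (supp n)" "finite (supp m)"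
  shows "Lam b (\<lambda>x. n x - m x) = Lam b n - Lam b m"
  using Lam_add[OF assms(1,2), of "\<lambda>x. - m x"] Lam_mult[OF assms(1,3), of "-1"] assms by simp

definition Phi :: "('a \<Rightarrow> rat) \<Rightarrow> 'a \<Rightarrow> int" where
  "Phi w y = (\<Sum>a\<in>supp w. if y = \<beta> (a, dn (w a) - 1) then nm (w a) else 0)"

definition W :: "('a \<Rightarrow> rat) set" where "W = {w. finite (supp w) \<and> supp w \<subseteq> X}"

lemma Phi_supp: "supp (Phi w) \<subseteq> (\<lambda>a. \<beta> (a, dn (w a) - 1)) ` supp w"
proof
  fix y assume "y \<in> supp (Phi w)"
  then have "(\<Sum>a\<in>supp w. if y = \<beta> (a, dn (w a) - 1) then nm (w a) else 0) \<noteq> 0"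
    by (simp add: supp_def Phi_def)
  then have "\<exists>a\<in>supp w. (if y = \<beta> (a, dn (w a) - 1) then nm (w a) else 0) \<noteq> 0"
  proof (rule contrapos_np)
    assume "\<not> (\<exists>a\<in>supp w. (if y = \<beta> (a, dn (w a) - 1) then nm (w a) else 0) \<noteq> 0)"
    then show "(\<Sum>a\<in>supp w. if y = \<beta> (a, dn (w a) - 1) then nm (w a) else 0) = 0"
      by (intro sum.neutral) blast
  qed
  then obtain a where "a \<in> supp w" "y = \<beta> (a, dn (w a) - 1)" by (auto split: if_splits)
  then show "y \<in> (\<lambda>a. \<beta> (a, dn (w a) - 1)) ` supp w" by blast
qed

lemma Phi_W: assumes "w \<in> W" shows "finite (supp (Phi w))" "supp (Phi w) \<subseteq> X"
proof -
  have "(\<lambda>a. \<beta> (a, dn (w a) - 1)) ` supp w \<subseteq> X" using assms bX unfolding W_def by auto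
  then show "supp (Phi w) \<subseteq> X" using Phi_supp[of w] by blast
  show "finite (supp (Phi w))" using Phi_supp[of w] assms unfolding W_def by (auto intro: finite_subset)
qed

lemma Phi_beta: assumes "w \<in> W" "b \<in> X"
  shows "Phi w (\<beta> (b, k)) = (if b \<in> supp w \<and> k = dn (w b) - 1 then nm (w b) else 0)"
proof -
  have "Phi w (\<beta> (b, k)) = (\<Sum>a\<in>supp w. if a = b then (if k = dn (w b) - 1 then nm (w b) else 0) else 0)"
    unfolding Phi_def
  proof (rule sum.cong)
    fix a assume "a \<in> supp w"
    then have "a \<in> X" using assms unfolding W_def by auto
    then show "(if \<beta> (b, k) = \<beta> (a, dn (w a) - 1) then nm (w a) else 0) =
      (if a = b then (if k = dn (w b) - 1 then nm (w b) else 0) else 0)"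
      using beq[OF assms(2) \<open>a \<in> X\<close>] by auto
  qed simp
  also have "\<dots> = (if b \<in> supp w \<and> k = dn (w b) - 1 then nm (w b) else 0)"
    using assms unfolding W_def by (simp add: sum.delta')
  finally show ?thesis .
qed

lemma Lam_Phi: assumes "w \<in> W" "b \<in> X" shows "Lam b (Phi w) = w b"
proof (cases "b \<in> supp w")
  case True
  have "Lam b (Phi w) = (\<Sum>k\<in>{dn (w b) - 1}. of_int (Phi w (\<beta> (b, k))) / of_nat (Suc k))"
    by (rule Lam_eq) (use Phi_beta[OF assms] in auto)
  also have "\<dots> = w b" using Phi_beta[OF assms] True nm_dn by simp
  finally show ?thesis .
next
  case False
  then have "w b = 0" by (simp add: supp_def)
  moreover have "Lam b (Phi w) = 0" unfolding Lam_def using Phi_beta[OF assms] False by simp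
  ultimately show ?thesis by simp
qed

end




context bctx
begin

definition Nc :: "('a \<Rightarrow> int) set" where
  "Nc = {n. finite (supp n) \<and> supp n \<subseteq> X \<and> (\<forall>b\<in>X. Lam b n = 0)}"
definition NN :: "'a set" where "NN = lin ` Nc"

lemma inNN: assumes "finite (supp n)" "supp n \<subseteq> X"
  shows "lin n \<in> NN \<longleftrightarrow> (\<forall>b\<in>X. Lam b n = 0)"
proof
  assume "lin n \<in> NN"
  then obtain m where m: "m \<in> Nc" "lin n = lin m" unfolding NN_def by auto
  then have "n = m" using indep_lin_inj[OF indX assms] unfolding Nc_def by auto
  then show "\<forall>b\<in>X. Lam b n = 0" using m unfolding Nc_def by auto
next
  assume "\<forall>b\<in>X. Lam b n = 0"
  then show "lin n \<in> NN" using assms unfolding NN_def Nc_def by auto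
qed

lemma fsX_add: "finite (supp n) \<Longrightarrow> supp n \<subseteq> X \<Longrightarrow> finite (supp m) \<Longrightarrow> supp m \<subseteq> X \<Longrightarrow>
  finite (supp (\<lambda>x. n x + m x)) \<and> supp (\<lambda>x. n x + m x) \<subseteq> X"
  for n m :: "'a \<Rightarrow> 'b::comm_monoid_add"
  using supp_add[of n m] by (auto intro: finite_subset)

lemma fsX_mult: "finite (supp n) \<Longrightarrow> supp n \<subseteq> X \<Longrightarrow>
  finite (supp (\<lambda>x. c * n x)) \<and> supp (\<lambda>x. c * n x) \<subseteq> X"
  for n :: "'a \<Rightarrow> 'b::mult_zero"
  using supp_mult[of c n] by (auto intro: finite_subset)

lemma fsX_diff: "finite (supp n) \<Longrightarrow> supp n \<subseteq> X \<Longrightarrow> finite (supp m) \<Longrightarrow> supp m \<subseteq> X \<Longrightarrow>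
  finite (supp (\<lambda>x. n x - m x)) \<and> supp (\<lambda>x. n x - m x) \<subseteq> X"
  for n m :: "'a \<Rightarrow> 'b::ab_group_add"
proof -
  have "supp (\<lambda>x. n x - m x) \<subseteq> supp n \<union> supp m" by (auto simp: supp_def)
  then show "finite (supp n) \<Longrightarrow> supp n \<subseteq> X \<Longrightarrow> finite (supp m) \<Longrightarrow> supp m \<subseteq> X \<Longrightarrow> ?thesis"
    by (auto intro: finite_subset)
qed

lemma Lam_zero: "Lam b (\<lambda>x. 0) = 0" by (simp add: Lam_def)

lemma NN_subgrp: "subgrp NN"
  unfolding subgrp_def
proof (intro conjI ballI)
  show "0 \<in> NN" using inNN[of "\<lambda>x. 0"] by (simp add: supp_def Lam_zero)
next
  fix x y assume "x \<in> NN" "y \<in> NN"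
  then obtain n m where nm: "n \<in> Nc" "m \<in> Nc" "x = lin n" "y = lin m" unfolding NN_def by auto
  then have fs: "finite (supp n)" "supp n \<subseteq> X" "finite (supp m)" "supp m \<subseteq> X" "\<forall>b\<in>X. Lam b n = 0" "\<forall>b\<in>X. Lam b m = 0"
    unfolding Nc_def by auto
  have "x + y = lin (\<lambda>z. n z + m z)" using nm lin_add[OF fs(1) fs(3)] by simp
  moreover have "lin (\<lambda>z. n z + m z) \<in> NN"
    using inNN fsX_add[OF fs(1-4)] Lam_add fs by simp
  ultimately show "x + y \<in> NN" by simp
next
  fix x assume "x \<in> NN"
  then obtain n where nm: "n \<in> Nc" "x = lin n" unfolding NN_def by auto
  then have fs: "finite (supp n)" "supp n \<subseteq> X" "\<forall>b\<in>X. Lam b n = 0"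
    unfolding Nc_def by auto
  have "- x = lin (\<lambda>z. (-1) * n z)" using nm lin_uminus[OF fs(1)] by simp
  moreover have "lin (\<lambda>z. (-1) * n z) \<in> NN"
  proof -
    have "\<forall>b\<in>X. Lam b (\<lambda>z. (-1) * n z) = 0"
    proof
      fix b assume "b \<in> X" then show "Lam b (\<lambda>z. (-1) * n z) = 0"
        using Lam_mult[OF \<open>b \<in> X\<close> fs(1), of "-1"] fs(3) by simp
    qed
    then show ?thesis using inNN[OF conjunct1[OF fsX_mult[OF fs(1-2)]] conjunct2[OF fsX_mult[OF fs(1-2)]]] by blast
  qed
  ultimately show "- x \<in> NN" by simp
qed

definition P :: "('a \<Rightarrow> rat) \<Rightarrow> 'a" where "P w = lin (Phi w)"

lemma W_add: "w1 \<in> W \<Longrightarrow> w2 \<in> W \<Longrightarrow> (\<lambda>x. w1 x + w2 x) \<in> W"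
  unfolding W_def using fsX_add by blast
lemma W_mult: "w \<in> W \<Longrightarrow> (\<lambda>x. c * w x) \<in> W"
  unfolding W_def using fsX_mult by blast
lemma W_zero: "(\<lambda>x. 0) \<in> W" by (simp add: W_def supp_def)

lemma P_add: assumes "w1 \<in> W" "w2 \<in> W"
  shows "P w1 + P w2 - P (\<lambda>x. w1 x + w2 x) \<in> NN"
proof -
  let ?w = "\<lambda>x. w1 x + w2 x"
  have w: "?w \<in> W" using W_add assms .
  note f1 = Phi_W[OF assms(1)] and f2 = Phi_W[OF assms(2)] and f3 = Phi_W[OF w]
  have s12: "finite (supp (\<lambda>x. Phi w1 x + Phi w2 x)) \<and> supp (\<lambda>x. Phi w1 x + Phi w2 x) \<subseteq> X"
    using fsX_add f1 f2 by blast
  have e: "P w1 + P w2 - P ?w = lin (\<lambda>x. (Phi w1 x + Phi w2 x) - Phi ?w x)"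
    unfolding P_def using lin_add[OF f1(1) f2(1)] lin_diff[OF conjunct1[OF s12] f3(1)] by simp
  have "lin (\<lambda>x. (Phi w1 x + Phi w2 x) - Phi ?w x) \<in> NN"
    using inNN fsX_diff[OF conjunct1[OF s12] conjunct2[OF s12] f3] Lam_diff Lam_add f1 f2 f3 s12
      Lam_Phi[OF assms(1)] Lam_Phi[OF assms(2)] Lam_Phi[OF w] by simp
  then show ?thesis using e by simp
qed

lemma P_zmul: assumes "w \<in> W"
  shows "zmul k (P w) - P (\<lambda>x. of_int k * w x) \<in> NN"
proof -
  let ?w = "\<lambda>x. of_int k * w x"
  have w: "?w \<in> W" using W_mult assms .
  note f1 = Phi_W[OF assms(1)] and f3 = Phi_W[OF w]
  have s12: "finite (supp (\<lambda>x. k * Phi w x)) \<and> supp (\<lambda>x. k * Phi w x) \<subseteq> X"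
    using fsX_mult f1 by blast
  have e: "zmul k (P w) - P ?w = lin (\<lambda>x. k * Phi w x - Phi ?w x)"
    unfolding P_def using lin_mult[OF f1(1), of k] lin_diff[OF conjunct1[OF s12] f3(1)] by simp
  have "lin (\<lambda>x. k * Phi w x - Phi ?w x) \<in> NN"
    using inNN fsX_diff[OF conjunct1[OF s12] conjunct2[OF s12] f3] Lam_diff Lam_mult f1 f3 s12
      Lam_Phi[OF assms(1)] Lam_Phi[OF w] by simp
  then show ?thesis using e by simp
qed

lemma P_eq: assumes "w1 \<in> W" "w2 \<in> W"
  shows "P w1 - P w2 \<in> NN \<longleftrightarrow> (\<forall>b\<in>X. w1 b = w2 b)"
proof -
  note f1 = Phi_W[OF assms(1)] and f2 = Phi_W[OF assms(2)]
  have e: "P w1 - P w2 = lin (\<lambda>x. Phi w1 x - Phi w2 x)"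
    unfolding P_def using lin_diff[OF f1(1) f2(1)] by simp
  have "lin (\<lambda>x. Phi w1 x - Phi w2 x) \<in> NN \<longleftrightarrow> (\<forall>b\<in>X. w1 b = w2 b)"
    using inNN fsX_diff[OF f1 f2] Lam_diff f1 f2 Lam_Phi[OF assms(1)] Lam_Phi[OF assms(2)] by simp
  then show ?thesis using e by simp
qed

lemma Phi_zero: "Phi (\<lambda>x. 0) = (\<lambda>y. 0)" by (simp add: Phi_def supp_def fun_eq_iff)
lemma P_zero: "P (\<lambda>x. 0) = 0" by (simp add: P_def Phi_zero)

end




context bctx
begin

definition kap :: "'a \<Rightarrow> 'a \<Rightarrow> rat" where
  "kap g = (SOME u. \<exists>m c. m \<noteq> 0 \<and> finite (supp c) \<and> supp c \<subseteq> X \<and> zmul m g = lin c \<and>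
      u = (\<lambda>x. of_int (c x) / of_int m))"

lemma rep_ex: "\<exists>m c. m \<noteq> 0 \<and> finite (supp c) \<and> supp c \<subseteq> X \<and> zmul m g = lin c"
  using maxrep[OF indX mxX] by blast

lemma kap_ex: "\<exists>m c. m \<noteq> 0 \<and> finite (supp c) \<and> supp c \<subseteq> X \<and> zmul m g = lin c \<and>
      kap g = (\<lambda>x. of_int (c x) / of_int m)"
proof -
  obtain m c where "m \<noteq> 0 \<and> finite (supp c) \<and> supp c \<subseteq> X \<and> zmul m g = lin c" using rep_ex by blast
  then have "\<exists>u m c. m \<noteq> 0 \<and> finite (supp c) \<and> supp c \<subseteq> X \<and> zmul m g = lin c \<and>
      u = (\<lambda>x. of_int (c x) / of_int m)" by blast
  from someI_ex[OF this] show ?thesis unfolding kap_def .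
qed

lemma same_ratio:
  assumes "m \<noteq> 0" "finite (supp c)" "supp c \<subseteq> X" "zmul m g = lin c"
    "m' \<noteq> 0" "finite (supp c')" "supp c' \<subseteq> X" "zmul m' h = lin c'"
  shows "(\<lambda>x. of_int (c x) / of_int m) = (\<lambda>x. of_int (c' x) / (of_int m' :: rat))
     \<longleftrightarrow> zmul (m * m') g = zmul (m * m') h"
proof -
  have L1: "zmul (m * m') g = lin (\<lambda>x. m' * c x)"
  proof -
    have "zmul (m * m') g = zmul m' (zmul m g)" by (simp add: zmul_mult[symmetric] mult.commute)
    then show ?thesis using lin_mult[OF assms(2), of m'] assms(4) by simp
  qed
  have L2: "zmul (m * m') h = lin (\<lambda>x. m * c' x)"
    using lin_mult[OF assms(6), of m] assms(8) by (simp add: zmul_mult)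
  have f1: "finite (supp (\<lambda>x. m' * c x)) \<and> supp (\<lambda>x. m' * c x) \<subseteq> X" using fsX_mult assms by blast
  have f2: "finite (supp (\<lambda>x. m * c' x)) \<and> supp (\<lambda>x. m * c' x) \<subseteq> X" using fsX_mult assms by blast
  have "(\<lambda>x. of_int (c x) / of_int m) = (\<lambda>x. of_int (c' x) / (of_int m' :: rat))
      \<longleftrightarrow> (\<lambda>x. m' * c x) = (\<lambda>x. m * c' x)"
  proof -
    have "of_int (c x) / of_int m = of_int (c' x) / (of_int m' :: rat) \<longleftrightarrow> m' * c x = m * c' x" for x
    proof -
      have "of_int (c x) / of_int m = of_int (c' x) / (of_int m' :: rat) \<longleftrightarrow>
          of_int (c x) * of_int m' = of_int (c' x) * (of_int m :: rat)"
        using assms(1,5) by (simp add: frac_eq_eq)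
      also have "\<dots> \<longleftrightarrow> of_int (m' * c x) = (of_int (m * c' x) :: rat)" by (simp add: mult.commute)
      also have "\<dots> \<longleftrightarrow> m' * c x = m * c' x" by (rule of_int_eq_iff)
      finally show ?thesis .
    qed
    then show ?thesis by (simp add: fun_eq_iff)
  qed
  also have "\<dots> \<longleftrightarrow> lin (\<lambda>x. m' * c x) = lin (\<lambda>x. m * c' x)"
    using indep_lin_inj[OF indX conjunct1[OF f1] conjunct2[OF f1] conjunct1[OF f2] conjunct2[OF f2]] by auto
  finally show ?thesis using L1 L2 by simp
qed

lemma kap_char: assumes "m \<noteq> 0" "finite (supp c)" "supp c \<subseteq> X" "zmul m g = lin c"
  shows "kap g = (\<lambda>x. of_int (c x) / of_int m)"
proof -
  obtain m' c' where r: "m' \<noteq> 0" "finite (supp c')" "supp c' \<subseteq> X" "zmul m' g = lin c'"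
    "kap g = (\<lambda>x. of_int (c' x) / of_int m')" using kap_ex by blast
  show ?thesis unfolding r(5) using same_ratio[OF r(1-4) assms] by simp
qed

lemma kap_W: "kap g \<in> W"
proof -
  obtain m c where r: "m \<noteq> 0" "finite (supp c)" "supp c \<subseteq> X" "zmul m g = lin c"
    "kap g = (\<lambda>x. of_int (c x) / of_int m)" using kap_ex by blast
  have "supp (kap g) = supp c" using r(1) unfolding r(5) by (auto simp: supp_def)
  then show ?thesis using r unfolding W_def by simp
qed

lemma kap_inj: assumes "kap g = kap h" shows "g = h"
proof -
  obtain m c where r: "m \<noteq> 0" "finite (supp c)" "supp c \<subseteq> X" "zmul m g = lin c"
    "kap g = (\<lambda>x. of_int (c x) / of_int m)" using kap_ex by blast
  obtain m' c' where r': "m' \<noteq> 0" "finite (supp c')" "supp c' \<subseteq> X" "zmul m' h = lin c'"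
    "kap h = (\<lambda>x. of_int (c' x) / of_int m')" using kap_ex by blast
  have "zmul (m * m') g = zmul (m * m') h" using same_ratio[OF r(1-4) r'(1-4)] assms r(5) r'(5) by simp
  then have z: "zmul (m * m') (g - h) = 0" by (simp add: zmul_diff_right)
  have "m * m' \<noteq> 0" using r(1) r'(1) by simp
  from torsion_free_zmul[OF tf this z] have "g - h = 0" .
  then show ?thesis by simp
qed

lemma kap_add: "kap (g + h) = (\<lambda>x. kap g x + kap h x)"
proof -
  obtain m c where r: "m \<noteq> 0" "finite (supp c)" "supp c \<subseteq> X" "zmul m g = lin c"
    "kap g = (\<lambda>x. of_int (c x) / of_int m)" using kap_ex by blast
  obtain m' c' where r': "m' \<noteq> 0" "finite (supp c')" "supp c' \<subseteq> X" "zmul m' h = lin c'"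
    "kap h = (\<lambda>x. of_int (c' x) / of_int m')" using kap_ex by blast
  have f1: "finite (supp (\<lambda>x. m' * c x)) \<and> supp (\<lambda>x. m' * c x) \<subseteq> X" using fsX_mult r by blast
  have f2: "finite (supp (\<lambda>x. m * c' x)) \<and> supp (\<lambda>x. m * c' x) \<subseteq> X" using fsX_mult r' by blast
  have f3: "finite (supp (\<lambda>x. m' * c x + m * c' x)) \<and> supp (\<lambda>x. m' * c x + m * c' x) \<subseteq> X"
    using fsX_add f1 f2 by blast
  have "zmul (m * m') (g + h) = zmul m' (zmul m g) + zmul m (zmul m' h)"
    by (simp add: zmul_add_right zmul_mult[symmetric] mult.commute)
  also have "\<dots> = lin (\<lambda>x. m' * c x) + lin (\<lambda>x. m * c' x)"
    using r(4) r'(4) lin_mult[OF r(2), of m'] lin_mult[OF r'(2), of m] by simp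
  also have "\<dots> = lin (\<lambda>x. m' * c x + m * c' x)" using lin_add[OF conjunct1[OF f1] conjunct1[OF f2]] by simp
  finally have "kap (g + h) = (\<lambda>x. of_int (m' * c x + m * c' x) / of_int (m * m'))"
    using kap_char[of "m * m'" "\<lambda>x. m' * c x + m * c' x" "g + h"] r(1) r'(1) f3 by simp
  also have "\<dots> = (\<lambda>x. kap g x + kap h x)"
    unfolding r(5) r'(5) using r(1) r'(1) by (simp add: fun_eq_iff field_simps)
  finally show ?thesis .
qed

definition fq :: "'a \<Rightarrow> 'a set" where "fq g = (+) (P (kap g)) ` NN"

lemma fq_inj_hom: "inj_hom_to_quot fq NN"
  unfolding inj_hom_to_quot_def
proof (intro conjI allI)
  fix x show "fq x \<in> cosets NN" unfolding fq_def cosets_def by blast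
next
  fix x y
  have "P (kap x) + P (kap y) - P (kap (x + y)) \<in> NN"
    using P_add[OF kap_W kap_W] kap_add by simp
  then have "P (kap (x + y)) - (P (kap x) + P (kap y)) \<in> NN"
    using subgrp_neg[OF NN_subgrp] by (metis minus_diff_eq)
  then show "fq (x + y) = coset_add (fq x) (fq y)"
    unfolding fq_def coset_add_eq[OF NN_subgrp] coset_eq[OF NN_subgrp] .
next
  show "inj fq"
  proof
    fix x y assume "fq x = fq y"
    then have "P (kap x) - P (kap y) \<in> NN" unfolding fq_def coset_eq[OF NN_subgrp] .
    then have "\<forall>b\<in>X. kap x b = kap y b" using P_eq[OF kap_W kap_W] by simp
    moreover have "\<forall>b. b \<notin> X \<longrightarrow> kap x b = 0 \<and> kap y b = 0"
      using kap_W[of x] kap_W[of y] unfolding W_def supp_def by auto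
    ultimately have "kap x = kap y" by (metis ext)
    then show "x = y" by (rule kap_inj)
  qed
qed

end




context bctx
begin

lemma not_sgb: assumes red: "reduced TYPE('a)" and Xne: "X \<noteq> {}"
  shows "\<not> semi_gen_bassian TYPE('a)"
proof
  assume sg: "semi_gen_bassian TYPE('a)"
  have "subgrp NN \<and> (\<exists>f. inj_hom_to_quot f NN)" using NN_subgrp fq_inj_hom by blast
  then have "\<exists>S. direct_summand S \<and> essential_in NN S" using sg unfolding semi_gen_bassian_def by blast
  then obtain S where ds: "direct_summand S" and ess: "essential_in NN S" by blast
  from ds have S: "subgrp S" unfolding direct_summand_def by simp
  from ds obtain T where T: "subgrp T" and ST: "S \<inter> T = {0}" and dec: "\<forall>g. \<exists>s\<in>S. \<exists>t\<in>T. g = s + t"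
    unfolding direct_summand_def by blast
  have NS: "NN \<subseteq> S" using ess unfolding essential_in_def by simp
  define p where "p g = (SOME t. t \<in> T \<and> g - t \<in> S)" for g
  have p1: "p g \<in> T \<and> g - p g \<in> S" for g
  proof -
    obtain s t where "s \<in> S" "t \<in> T" "g = s + t" using dec by blast
    then have "\<exists>t. t \<in> T \<and> g - t \<in> S" by (intro exI[of _ t]) simp
    then show ?thesis unfolding p_def by (rule someI_ex)
  qed
  have puniq: "p g = t" if "t \<in> T" "g - t \<in> S" for g t
  proof -
    have a: "p g - t \<in> T" using subgrp_diff[OF T] p1 that by blast
    have "(g - t) - (g - p g) \<in> S" using subgrp_diff[OF S] p1 that by blast
    then have b: "p g - t \<in> S" by simp
    from a b ST have "p g - t = 0" by blast
    then show ?thesis by simp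
  qed
  have padd: "p (x + y) = p x + p y" for x y
  proof (rule puniq)
    show "p x + p y \<in> T" using subgrp_add[OF T] p1 by blast
    have "(x - p x) + (y - p y) \<in> S" using subgrp_add[OF S] p1 by blast
    then show "x + y - (p x + p y) \<in> S" by (simp add: algebra_simps)
  qed
  have pS: "p y = p z" if "y - z \<in> S" for y z
  proof (rule puniq)
    show "p z \<in> T" using p1 by blast
    have "(y - z) + (z - p z) \<in> S" using subgrp_add[OF S] p1 that by blast
    then show "y - p z \<in> S" by simp
  qed
  have p0: "p 0 = 0" by (rule puniq) (use subgrp_0[OF T] subgrp_0[OF S] in auto)
  have pNN: "p y = p z" if "y - z \<in> NN" for y z using pS NS that by blast
  define D where "D = (\<lambda>w. p (P w)) ` W"
  have Dsub: "subgrp D" unfolding subgrp_def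
  proof (intro conjI ballI)
    show "0 \<in> D" unfolding D_def using W_zero P_zero p0 by (metis image_eqI)
  next
    fix x y assume "x \<in> D" "y \<in> D"
    then obtain w1 w2 where w: "w1 \<in> W" "w2 \<in> W" "x = p (P w1)" "y = p (P w2)" unfolding D_def by blast
    have "x + y = p (P w1 + P w2)" using w padd by simp
    also have "\<dots> = p (P (\<lambda>z. w1 z + w2 z))" using pNN P_add[OF w(1,2)] by blast
    finally show "x + y \<in> D" unfolding D_def using W_add[OF w(1,2)] by blast
  next
    fix x assume "x \<in> D"
    then obtain w where w: "w \<in> W" "x = p (P w)" unfolding D_def by blast
    have "- x = zmul (-1) (p (P w))" using w by (simp add: zmul_uminus_left)
    also have "\<dots> = p (zmul (-1) (P w))" using hom_zmul[of p, OF padd] by simp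
    also have "\<dots> = p (P (\<lambda>z. of_int (-1) * w z))" using pNN P_zmul[OF w(1)] by blast
    finally show "- x \<in> D" unfolding D_def using W_mult[OF w(1)] by blast
  qed
  have Ddiv: "divisible_subgrp D" unfolding divisible_subgrp_def
  proof (intro conjI Dsub ballI allI impI)
    fix x and n :: nat assume "x \<in> D" "n > 0"
    then obtain w where w: "w \<in> W" "x = p (P w)" unfolding D_def by blast
    let ?w' = "\<lambda>z. (1 / of_nat n) * w z"
    have w': "?w' \<in> W" using W_mult[OF w(1)] .
    have "zmul (int n) (p (P ?w')) = p (zmul (int n) (P ?w'))" using hom_zmul[of p, OF padd] by simp
    also have "\<dots> = p (P (\<lambda>z. of_int (int n) * ?w' z))" using pNN P_zmul[OF w'] by blast
    also have "\<dots> = p (P w)"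
    proof (rule pNN)
      have "(\<lambda>z. of_int (int n) * ?w' z) \<in> W" using W_mult[OF w'] .
      moreover have "\<forall>b\<in>X. of_int (int n) * ?w' b = w b" using \<open>n > 0\<close> by simp
      ultimately show "P (\<lambda>z. of_int (int n) * ?w' z) - P w \<in> NN" using P_eq w(1) by blast
    qed
    finally show "\<exists>y\<in>D. zmul (int n) y = x" unfolding D_def using w' w(2) by blast
  qed
  have D0: "D = {0}" using red Ddiv unfolding reduced_def by blast
  have PS: "P w \<in> S" if "w \<in> W" for w
  proof -
    have "p (P w) = 0" using D0 that unfolding D_def by blast
    then show ?thesis using p1[of "P w"] by simp
  qed
  obtain a0 where a0: "a0 \<in> X" using Xne by blast
  define w0 where "w0 = (\<lambda>x. if x = a0 then (1::rat) else 0)"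
  have w0W: "w0 \<in> W" unfolding W_def w0_def supp_def using a0 by auto
  define y0 where "y0 = P w0"
  have y0S: "y0 \<in> S" using PS w0W y0_def by simp
  have PN: "P w \<in> NN \<longleftrightarrow> (\<forall>b\<in>X. w b = 0)" if "w \<in> W" for w
    using P_eq[OF that W_zero] P_zero by simp
  define C where "C = range (\<lambda>k. zmul k y0)"
  have Csub: "subgrp C" unfolding subgrp_def C_def
  proof (intro conjI ballI)
    show "0 \<in> range (\<lambda>k. zmul k y0)" by (metis rangeI zmul_0)
  next
    fix x y assume "x \<in> range (\<lambda>k. zmul k y0)" "y \<in> range (\<lambda>k. zmul k y0)"
    then obtain k l where "x = zmul k y0" "y = zmul l y0" by blast
    then have "x + y = zmul (k + l) y0" by (simp add: zmul_add_left)
    then show "x + y \<in> range (\<lambda>k. zmul k y0)" by blast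
  next
    fix x assume "x \<in> range (\<lambda>k. zmul k y0)"
    then obtain k where "x = zmul k y0" by blast
    then have "- x = zmul (- k) y0" by (simp add: zmul_uminus_left)
    then show "- x \<in> range (\<lambda>k. zmul k y0)" by blast
  qed
  have CS: "C \<subseteq> S" unfolding C_def using subgrp_zmul[OF S y0S] by blast
  have y0nz: "y0 \<noteq> 0"
  proof
    assume "y0 = 0"
    then have "P w0 \<in> NN" using subgrp_0[OF NN_subgrp] y0_def by simp
    then have "\<forall>b\<in>X. w0 b = 0" using PN[OF w0W] by simp
    then have "w0 a0 = 0" using a0 by blast
    then show False by (simp add: w0_def)
  qed
  have "y0 \<in> C" unfolding C_def by (metis rangeI zmul_1)
  then have "C \<noteq> {0}" using y0nz by blast
  then have "NN \<inter> C \<noteq> {0}" using ess Csub CS unfolding essential_in_def by blast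
  moreover have "0 \<in> NN \<inter> C" using subgrp_0[OF NN_subgrp] subgrp_0[OF Csub] by blast
  ultimately obtain z where z: "z \<in> NN" "z \<in> C" "z \<noteq> 0" by blast
  then obtain k where zk: "z = zmul k y0" unfolding C_def by blast
  have d: "zmul k (P w0) - P (\<lambda>x. of_int k * w0 x) \<in> NN" using P_zmul[OF w0W] .
  have "z - (zmul k (P w0) - P (\<lambda>x. of_int k * w0 x)) \<in> NN" using subgrp_diff[OF NN_subgrp z(1) d] .
  then have "P (\<lambda>x. of_int k * w0 x) \<in> NN" using zk y0_def by simp
  then have "\<forall>b\<in>X. of_int k * w0 b = 0" using PN[OF W_mult[OF w0W]] by simp
  then have "of_int k * w0 a0 = 0" using a0 by blast
  then have "k = 0" by (simp add: w0_def)
  then show False using z zk by simp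
qed

end

lemma zorn_indep: "\<exists>X::'a::ab_group_add set. z_independent X \<and> (\<forall>T. X \<subseteq> T \<and> z_independent T \<longrightarrow> T = X)"
proof -
  let ?A = "{X::'a set. z_independent X}"
  have "\<forall>C\<in>chains ?A. \<Union>C \<in> ?A"
  proof
    fix C assume C: "C \<in> chains ?A"
    show "\<Union>C \<in> ?A" unfolding mem_Collect_eq z_independent_def
    proof (intro allI impI)
      fix F c assume a: "finite F \<and> F \<subseteq> \<Union>C \<and> (\<Sum>x\<in>F. zmul (c x) x) = 0"
      show "\<forall>x\<in>F. c x = 0"
      proof (cases "C = {}")
        case True then show ?thesis using a by simp
      next
        case False
        have ch: "subset.chain ?A C" using C by (simp add: chains_alt_def)
        obtain B where "B \<in> C" "F \<subseteq> B"
          using finite_subset_Union_chain[of F C ?A] a False ch by blast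
        moreover have "z_independent B" using \<open>B \<in> C\<close> C unfolding chains_def by blast
        ultimately show ?thesis using indepD[of B F c] a by blast
      qed
    qed
  qed
  from Zorn_Lemma[OF this] obtain M where "M \<in> ?A" "\<forall>X\<in>?A. M \<subseteq> X \<longrightarrow> X = M" by blast
  then show ?thesis by blast
qed

lemma beta_ex: assumes "infinite (X :: 'a set)"
  shows "\<exists>\<beta>::'a \<times> nat \<Rightarrow> 'a. inj_on \<beta> (X \<times> UNIV) \<and> \<beta> ` (X \<times> UNIV) \<subseteq> X"
proof -
  have 1: "ordLeq3 (card_of (UNIV::nat set)) (card_of X)"
    using infinite_iff_card_of_nat assms by blast
  have "ordIso2 (card_of (X \<times> (UNIV::nat set))) (card_of X)"
    using card_of_Times_infinite[OF assms _ 1] by simp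
  then have "ordLeq3 (card_of (X \<times> (UNIV::nat set))) (card_of X)"
    using ordIso_iff_ordLeq by blast
  then show ?thesis using card_of_ordLeq by blast
qed




lemma bassian_sgb: assumes "bassian TYPE('a::ab_group_add)" shows "semi_gen_bassian TYPE('a)"
  unfolding semi_gen_bassian_def
proof (intro allI impI)
  fix H :: "'a set" assume "subgrp H \<and> (\<exists>f. inj_hom_to_quot f H)"
  then have H0: "H = {0}" using assms unfolding bassian_def by blast
  have "direct_summand H" unfolding direct_summand_def H0 subgrp_def
    by (intro conjI exI[of _ UNIV]) auto
  moreover have "essential_in H H" unfolding essential_in_def H0 subgrp_def by auto
  ultimately show "\<exists>S. direct_summand S \<and> essential_in H S" by blast
qed

lemma sgb_finite_rank:
  assumes red: "reduced TYPE('a::ab_group_add)" and tf: "torsion_free TYPE('a)"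
    and sg: "semi_gen_bassian TYPE('a)"
  shows "finite_rank TYPE('a)"
proof (rule ccontr)
  assume nfr: "\<not> finite_rank TYPE('a)"
  obtain X :: "'a set" where indX: "z_independent X" and mxX: "\<forall>T. X \<subseteq> T \<and> z_independent T \<longrightarrow> T = X"
    using zorn_indep by blast
  have inf: "infinite X" using nfr indX mxX unfolding finite_rank_def by blast
  then obtain \<beta> :: "'a \<times> nat \<Rightarrow> 'a" where b: "inj_on \<beta> (X \<times> UNIV)" "\<beta> ` (X \<times> UNIV) \<subseteq> X"
    using beta_ex by blast
  interpret bctx X \<beta> using indX mxX tf b by unfold_locales
  have "X \<noteq> {}" using inf by auto
  then show False using not_sgb[OF red] sg by blast
qed

theorem proposition2p6:
  assumes "reduced TYPE('a::ab_group_add)" and "torsion_free TYPE('a)"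
  shows "(semi_gen_bassian TYPE('a) \<longleftrightarrow> bassian TYPE('a)) \<and>
         (bassian TYPE('a) \<longleftrightarrow> finite_rank TYPE('a))"
  using bassian_sgb[where 'a='a] sgb_finite_rank[OF assms] finite_rank_bassian[OF assms(2)] by blast



end
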